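(* Let $T$ be a tree on $n$ vertices with costs $c:V(T)\to\mathbb{R}_{>0}$ normalized so that $\max_{v\in V(T)}c(v)=1$. Let $\mathcal{T}$ be a subtree of $T$ and let $0<a<b$ be such that $c(v)\le b$ for all $v\in V(\mathcal{T})$ and $2a\ge b$. Assume that either $b\le 1/\log n$, or $c(v)>a$ for every $v\in V(\mathcal{T})$. Let $D$ be the ranking-based decision tree of $\mathcal{T}$. Then $\texttt{COST}_D(\mathcal{T},c)\le 2\cdot\texttt{OPT}(T,c)$.
   Context: Search model: a query to $v$ costs $c(v)$ and returns either that $v$ is the target $x$ or the component of $T-v$ containing $x$. A decision tree for a tree $T$ is (recursively) a rooted tree whose root is a vertex $v$ of $T$ and whose root subtrees are decision trees for the components of $T-v$, one per component. $\texttt{COST}_D(T,c)$ is the maximum over $x\in V(T)$ of the total cost of the vertices on the root-to-$x$ path in $D$; $\texttt{OPT}(T,c)$ is the minimum cost over all decision trees for $T$. A vertex ranking of a tree is a labeling $l$ of its vertices by positive integers such that whenever $u\ne v$ and $l(u)=l(v)$, some vertex $z$ on the path strictly between $u$ and $v$ has $l(z)>l(v)$. The ranking-based decision tree of a tree $\mathcal{T}$ is obtained from a vertex ranking of $\mathcal{T}$ using the minimum possible number of distinct labels: query the unique vertex $z$ with largest label as the root, and below it attach, recursively, the decision trees so obtained (with the restricted labeling) for each component of $\mathcal{T}-z$. Logarithms are base 2. *)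

theory Defs
  imports Complex_Main
begin

text \<open>Graphs: a symmetric irreflexive adjacency relation E on vertices; a vertex set S
  determines the induced subgraph.\<close>

definition is_path :: "('a \<Rightarrow> 'a \<Rightarrow> bool) \<Rightarrow> 'a set \<Rightarrow> 'a list \<Rightarrow> 'a \<Rightarrow> 'a \<Rightarrow> bool" where
  "is_path E S p u v \<longleftrightarrow> p \<noteq> [] \<and> hd p = u \<and> last p = v \<and> distinct p \<and> set p \<subseteq> S \<and>
     (\<forall>i. Suc i < length p \<longrightarrow> E (p ! i) (p ! Suc i))"

definition is_tree :: "('a \<Rightarrow> 'a \<Rightarrow> bool) \<Rightarrow> 'a set \<Rightarrow> bool" where
  "is_tree E S \<longleftrightarrow> finite S \<and> S \<noteq> {} \<and> (\<forall>u v. E u v \<longrightarrow> E v u) \<and> (\<forall>u. \<not> E u u) \<and>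
     (\<forall>u\<in>S. \<forall>v\<in>S. \<exists>!p. is_path E S p u v)"

definition comps :: "('a \<Rightarrow> 'a \<Rightarrow> bool) \<Rightarrow> 'a set \<Rightarrow> 'a set set" where
  "comps E S = {C. \<exists>x\<in>S. C = {y\<in>S. \<exists>p. is_path E S p x y}}"

datatype 'a dtree = DNode 'a "'a dtree list"

inductive is_dt :: "('a \<Rightarrow> 'a \<Rightarrow> bool) \<Rightarrow> 'a set \<Rightarrow> 'a dtree \<Rightarrow> bool" for E where
  "\<lbrakk> v \<in> S; distinct Cs; set Cs = comps E (S - {v}); list_all2 (is_dt E) Cs ts \<rbrakk>
     \<Longrightarrow> is_dt E S (DNode v ts)"

text \<open>Costs of the root-to-node paths in a decision tree (every vertex of T is exactly one node).\<close>
fun path_costs :: "('a \<Rightarrow> real) \<Rightarrow> 'a dtree \<Rightarrow> real set" where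
  "path_costs c (DNode v ts) = {c v} \<union> (\<Union>t\<in>set ts. (\<lambda>r. c v + r) ` path_costs c t)"

definition COST :: "'a dtree \<Rightarrow> ('a \<Rightarrow> real) \<Rightarrow> real" where
  "COST D c = Max (path_costs c D)"

definition OPT :: "('a \<Rightarrow> 'a \<Rightarrow> bool) \<Rightarrow> 'a set \<Rightarrow> ('a \<Rightarrow> real) \<Rightarrow> real" where
  "OPT E S c = Inf {COST D c | D. is_dt E S D}"

definition vertex_ranking :: "('a \<Rightarrow> 'a \<Rightarrow> bool) \<Rightarrow> 'a set \<Rightarrow> ('a \<Rightarrow> nat) \<Rightarrow> bool" where
  "vertex_ranking E S l \<longleftrightarrow> (\<forall>v\<in>S. l v \<ge> 1) \<and>
     (\<forall>u\<in>S. \<forall>v\<in>S. u \<noteq> v \<and> l u = l v \<longrightarrow>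
        (\<exists>p z. is_path E S p u v \<and> z \<in> set p \<and> z \<noteq> u \<and> z \<noteq> v \<and> l z > l v))"

definition optimal_ranking :: "('a \<Rightarrow> 'a \<Rightarrow> bool) \<Rightarrow> 'a set \<Rightarrow> ('a \<Rightarrow> nat) \<Rightarrow> bool" where
  "optimal_ranking E S l \<longleftrightarrow> vertex_ranking E S l \<and>
     (\<forall>l'. vertex_ranking E S l' \<longrightarrow> card (l ` S) \<le> card (l' ` S))"

inductive rank_dt :: "('a \<Rightarrow> 'a \<Rightarrow> bool) \<Rightarrow> ('a \<Rightarrow> nat) \<Rightarrow> 'a set \<Rightarrow> 'a dtree \<Rightarrow> bool" for E l where
  "\<lbrakk> z \<in> S; \<forall>y\<in>S. y \<noteq> z \<longrightarrow> l y < l z; distinct Cs; set Cs = comps E (S - {z});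
     list_all2 (rank_dt E l) Cs ts \<rbrakk>
     \<Longrightarrow> rank_dt E l S (DNode z ts)"

end

theory Submission
  imports Defs
begin

lemma edges_Cons2:
  "(\<forall>i. Suc i < length (a#b#p) \<longrightarrow> E ((a#b#p)!i) ((a#b#p)!Suc i)) \<longleftrightarrow>
   E a b \<and> (\<forall>i. Suc i < length (b#p) \<longrightarrow> E ((b#p)!i) ((b#p)!Suc i))"
proof
  assume H: "\<forall>i. Suc i < length (a#b#p) \<longrightarrow> E ((a#b#p)!i) ((a#b#p)!Suc i)"
  have "E a b" using H[rule_format, of 0] by simp
  moreover have "\<forall>i. Suc i < length (b#p) \<longrightarrow> E ((b#p)!i) ((b#p)!Suc i)"
  proof (intro allI impI)
    fix i assume "Suc i < length (b#p)"
    then show "E ((b#p)!i) ((b#p)!Suc i)" using H[rule_format, of "Suc i"] by simp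
  qed
  ultimately show "E a b \<and> (\<forall>i. Suc i < length (b#p) \<longrightarrow> E ((b#p)!i) ((b#p)!Suc i))" by blast
next
  assume H: "E a b \<and> (\<forall>i. Suc i < length (b#p) \<longrightarrow> E ((b#p)!i) ((b#p)!Suc i))"
  show "\<forall>i. Suc i < length (a#b#p) \<longrightarrow> E ((a#b#p)!i) ((a#b#p)!Suc i)"
  proof (intro allI impI)
    fix i assume "Suc i < length (a#b#p)"
    then show "E ((a#b#p)!i) ((a#b#p)!Suc i)" using H by (cases i) auto
  qed
qed

lemma is_path_Nil[simp]: "\<not> is_path E S [] u v"
  by (simp add: is_path_def)

lemma is_path_single[simp]: "is_path E S [a] u v \<longleftrightarrow> a = u \<and> a = v \<and> a \<in> S"
  by (auto simp: is_path_def)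

lemma is_path_Cons2:
  "is_path E S (a # b # p) u v \<longleftrightarrow> a = u \<and> a \<in> S \<and> E a b \<and> a \<notin> set (b#p) \<and> is_path E S (b # p) b v"
  unfolding is_path_def edges_Cons2 by auto

lemma is_path_Cons:
  "is_path E S (a # p) u v \<longleftrightarrow> a = u \<and> (p = [] \<longrightarrow> a = v \<and> a \<in> S) \<and>
     (p \<noteq> [] \<longrightarrow> a \<in> S \<and> E a (hd p) \<and> a \<notin> set p \<and> is_path E S p (hd p) v)"
  by (cases p) (auto simp: is_path_Cons2)

lemma is_path_mono: "is_path E S p u v \<Longrightarrow> S \<subseteq> S' \<Longrightarrow> is_path E S' p u v"
  by (auto simp: is_path_def)

lemma is_path_restrict: "is_path E S p u v \<Longrightarrow> set p \<subseteq> S' \<Longrightarrow> is_path E S' p u v"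
  by (auto simp: is_path_def)

lemma is_path_set: "is_path E S p u v \<Longrightarrow> set p \<subseteq> S \<and> u \<in> set p \<and> v \<in> set p"
  by (auto simp: is_path_def)

lemma path_suffix:
  "is_path E S p u v \<Longrightarrow> x \<in> set p \<Longrightarrow> \<exists>q. is_path E S q x v \<and> set q \<subseteq> set p"
proof (induction p arbitrary: u)
  case Nil then show ?case by simp
next
  case (Cons a p)
  show ?case
  proof (cases "x = a")
    case True
    have "a = u" using Cons.prems(1) by (simp add: is_path_def)
    then show ?thesis using Cons.prems(1) True by (intro exI[of _ "a # p"]) simp
  next
    case False
    then have "p \<noteq> []" "x \<in> set p" using Cons.prems by auto
    then have "is_path E S p (hd p) v" using Cons.prems(1) by (simp add: is_path_Cons)
    then obtain q where "is_path E S q x v" "set q \<subseteq> set p" using Cons.IH \<open>x \<in> set p\<close> by blast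
    then show ?thesis by auto
  qed
qed

lemma path_prefix:
  "is_path E S p u v \<Longrightarrow> x \<in> set p \<Longrightarrow>
    \<exists>q. is_path E S q u x \<and> set q \<subseteq> set p \<and> (x \<noteq> v \<longrightarrow> v \<notin> set q)"
proof (induction p arbitrary: u)
  case Nil then show ?case by simp
next
  case (Cons a p)
  show ?case
  proof (cases "x = a")
    case True
    have "a \<noteq> v \<Longrightarrow> True" by simp
    show ?thesis using Cons.prems True
      by (intro exI[of _ "[a]"]) (auto simp: is_path_Cons)
  next
    case False
    then have pn: "p \<noteq> []" "x \<in> set p" using Cons.prems by auto
    then have pp: "is_path E S p (hd p) v" "a = u" "a \<in> S" "E a (hd p)" "a \<notin> set p"
      using Cons.prems(1) by (auto simp add: is_path_Cons)
    then obtain q where q: "is_path E S q (hd p) x" "set q \<subseteq> set p" "x \<noteq> v \<longrightarrow> v \<notin> set q"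
      using Cons.IH pn by blast
    have "v \<in> set p" using pp(1) is_path_set by fast
    then have "a \<noteq> v" using pp by auto
    have "q \<noteq> []" using q(1) by auto
    moreover have "hd q = hd p" using q(1) by (simp add: is_path_def)
    ultimately have "is_path E S (a # q) u x" using q pp by (auto simp: is_path_Cons)
    then show ?thesis using q \<open>a \<noteq> v\<close> by (intro exI[of _ "a # q"]) auto
  qed
qed

lemma path_snoc:
  "is_path E S q x y \<Longrightarrow> z \<notin> set q \<Longrightarrow> z \<in> S \<Longrightarrow> E y z \<Longrightarrow> is_path E S (q @ [z]) x z"
proof (induction q arbitrary: x)
  case Nil then show ?case by simp
next
  case (Cons a q)
  show ?case
  proof (cases "q = []")
    case True then show ?thesis using Cons.prems by (auto simp: is_path_Cons2)
  next
    case False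
    then have "is_path E S q (hd q) y" "a = x" "a \<in> S" "E a (hd q)" "a \<notin> set q"
      using Cons.prems(1) by (auto simp add: is_path_Cons)
    then have "is_path E S (q @ [z]) (hd q) z" using Cons by auto
    moreover have "a \<noteq> z" using Cons.prems by auto
    ultimately show ?thesis using False \<open>a = x\<close> \<open>a \<in> S\<close> \<open>E a (hd q)\<close> \<open>a \<notin> set q\<close>
      by (auto simp: is_path_Cons)
  qed
qed

definition conn :: "('a \<Rightarrow> 'a \<Rightarrow> bool) \<Rightarrow> 'a set \<Rightarrow> 'a \<Rightarrow> 'a \<Rightarrow> bool" where
  "conn E S x y \<longleftrightarrow> (\<exists>p. is_path E S p x y)"

definition RS :: "('a \<Rightarrow> 'a \<Rightarrow> bool) \<Rightarrow> 'a set \<Rightarrow> 'a \<Rightarrow> 'a \<Rightarrow> bool" where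
  "RS E S x y \<longleftrightarrow> E x y \<and> x \<in> S \<and> y \<in> S"

lemma path_rtrancl: "is_path E S p u v \<Longrightarrow> (RS E S)\<^sup>*\<^sup>* u v"
proof (induction p arbitrary: u)
  case Nil then show ?case by simp
next
  case (Cons a p)
  show ?case
  proof (cases "p = []")
    case True then show ?thesis using Cons.prems by auto
  next
    case False
    then have "is_path E S p (hd p) v" "a = u" "a \<in> S" "E a (hd p)"
      using Cons.prems(1) by (auto simp add: is_path_Cons)
    moreover have "hd p \<in> S" using calculation(1) is_path_set by fast
    ultimately show ?thesis using Cons.IH
      by (metis RS_def converse_rtranclp_into_rtranclp)
  qed
qed

lemma rtrancl_path: "(RS E S)\<^sup>*\<^sup>* u v \<Longrightarrow> u \<in> S \<Longrightarrow> \<exists>p. is_path E S p u v"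
proof (induction rule: converse_rtranclp_induct)
  case base then show ?case by (intro exI[of _ "[v]"]) simp
next
  case (step x y)
  then have xy: "E x y" "x \<in> S" "y \<in> S" by (auto simp: RS_def)
  then obtain p where p: "is_path E S p y v" using step by blast
  show ?case
  proof (cases "x \<in> set p")
    case True then show ?thesis using path_suffix[OF p] by blast
  next
    case False
    have "p \<noteq> []" "hd p = y" using p by (auto simp: is_path_def)
    then have "is_path E S (x # p) x v" using p xy False by (auto simp: is_path_Cons)
    then show ?thesis by blast
  qed
qed

lemma conn_iff: "conn E S u v \<longleftrightarrow> u \<in> S \<and> (RS E S)\<^sup>*\<^sup>* u v"
  unfolding conn_def
proof
  assume "\<exists>p. is_path E S p u v"
  then obtain p where p: "is_path E S p u v" by blast
  then show "u \<in> S \<and> (RS E S)\<^sup>*\<^sup>* u v" using path_rtrancl is_path_set by fast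
next
  assume "u \<in> S \<and> (RS E S)\<^sup>*\<^sup>* u v"
  then show "\<exists>p. is_path E S p u v" using rtrancl_path by fast
qed

lemma conn_refl: "x \<in> S \<Longrightarrow> conn E S x x"
  by (simp add: conn_iff)

lemma conn_in: "conn E S x y \<Longrightarrow> x \<in> S \<and> y \<in> S"
  unfolding conn_def using is_path_set by fast

lemma conn_trans: "conn E S x y \<Longrightarrow> conn E S y z \<Longrightarrow> conn E S x z"
  by (auto simp: conn_iff)

lemma RS_sym_rtrancl:
  assumes "\<forall>u v. E u v \<longrightarrow> E v u" "(RS E S)\<^sup>*\<^sup>* x y" shows "(RS E S)\<^sup>*\<^sup>* y x"
  using assms(2)
proof (induction rule: rtranclp_induct)
  case base then show ?case by simp
next
  case (step y z)
  then have "RS E S z y" using assms(1) by (auto simp: RS_def)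
  then show ?case using step by (meson converse_rtranclp_into_rtranclp)
qed

lemma conn_sym: "\<forall>u v. E u v \<longrightarrow> E v u \<Longrightarrow> conn E S x y \<Longrightarrow> conn E S y x"
  using RS_sym_rtrancl conn_in by (metis conn_iff)

lemma conn_path_elem: "is_path E S p u v \<Longrightarrow> x \<in> set p \<Longrightarrow> conn E S u x"
  unfolding conn_def by (drule path_prefix) auto

definition cmp :: "('a \<Rightarrow> 'a \<Rightarrow> bool) \<Rightarrow> 'a set \<Rightarrow> 'a \<Rightarrow> 'a set" where
  "cmp E S x = {y\<in>S. conn E S x y}"

lemma comps_alt: "comps E S = cmp E S ` S"
  unfolding comps_def cmp_def conn_def image_def by simp

lemma comp_self: "x \<in> S \<Longrightarrow> x \<in> cmp E S x"
  by (simp add: cmp_def conn_refl)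

lemma comp_sub: "cmp E S x \<subseteq> S"
  by (auto simp: cmp_def)

lemma comp_eq:
  assumes "\<forall>u v. E u v \<longrightarrow> E v u" "y \<in> cmp E S x" shows "cmp E S y = cmp E S x"
proof -
  have xy: "conn E S x y" using assms(2) by (simp add: cmp_def)
  have yx: "conn E S y x" by (rule conn_sym[OF assms(1) xy])
  show ?thesis unfolding cmp_def using conn_trans[OF xy] conn_trans[OF yx] by blast
qed

lemma comps_eq:
  assumes "\<forall>u v. E u v \<longrightarrow> E v u" "C \<in> comps E S" "y \<in> C" shows "C = cmp E S y"
proof -
  obtain x where "C = cmp E S x" using assms(2) unfolding comps_alt by blast
  then show ?thesis using comp_eq[OF assms(1)] assms(3) by simp
qed

lemma comps_sub: "C \<in> comps E S \<Longrightarrow> C \<subseteq> S"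
  unfolding comps_alt cmp_def by auto

lemma comps_cover: "x \<in> S \<Longrightarrow> cmp E S x \<in> comps E S"
  unfolding comps_alt by (rule imageI)

lemma comp_conn: "y \<in> cmp E S x \<longleftrightarrow> conn E S x y"
  unfolding cmp_def using conn_in[of E S x y] by blast

lemma finite_comps: "finite S \<Longrightarrow> finite (comps E S)"
  unfolding comps_alt by simp


lemma l2_set: "list_all2 P xs ys \<Longrightarrow> y \<in> set ys \<Longrightarrow> \<exists>x\<in>set xs. P x y"
  by (induction xs ys rule: list_all2_induct) auto

lemma l2_set': "list_all2 P xs ys \<Longrightarrow> x \<in> set xs \<Longrightarrow> \<exists>y\<in>set ys. P x y"
  by (induction xs ys rule: list_all2_induct) auto

locale tr =
  fixes E :: "'a \<Rightarrow> 'a \<Rightarrow> bool" and V :: "'a set"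
  assumes tree: "is_tree E V"
begin

lemma symE: "\<forall>u v. E u v \<longrightarrow> E v u"
  using tree by (simp add: is_tree_def)

lemma finV: "finite V"
  using tree by (simp add: is_tree_def)

lemma path_unique:
  "u \<in> V \<Longrightarrow> v \<in> V \<Longrightarrow> is_path E V p u v \<Longrightarrow> is_path E V q u v \<Longrightarrow> p = q"
  using tree unfolding is_tree_def by blast

lemma path_exists: "u \<in> V \<Longrightarrow> v \<in> V \<Longrightarrow> \<exists>p. is_path E V p u v"
  using tree unfolding is_tree_def by blast

definition cvx :: "'a set \<Rightarrow> bool" where
  "cvx S \<longleftrightarrow> S \<subseteq> V \<and> (\<forall>u\<in>S. \<forall>v\<in>S. \<forall>p. is_path E V p u v \<longrightarrow> set p \<subseteq> S)"

lemma cvx_V: "cvx V"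
  unfolding cvx_def using is_path_set by fast

lemma cvx_tree: assumes "U \<subseteq> V" "is_tree E U" shows "cvx U"
  unfolding cvx_def
proof (intro conjI ballI allI impI)
  show "U \<subseteq> V" by fact
  fix u v p assume uv: "u \<in> U" "v \<in> U" and p: "is_path E V p u v"
  obtain q where q: "is_path E U q u v" using assms(2) uv unfolding is_tree_def by blast
  have "is_path E V q u v" using is_path_mono[OF q assms(1)] .
  then have "p = q" using path_unique p uv assms(1) by blast
  then show "set p \<subseteq> U" using q is_path_set by fast
qed

lemma cvx_comp:
  assumes S: "cvx S" and w: "w \<in> S" and C: "C \<in> comps E (S - {w})"
  shows "cvx C"
  unfolding cvx_def
proof (intro conjI ballI allI impI)
  have CS: "C \<subseteq> S - {w}" using comps_sub[OF C] .
  then show "C \<subseteq> V" using S unfolding cvx_def by blast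
  fix u v p assume uv: "u \<in> C" "v \<in> C" and p: "is_path E V p u v"
  have Cu: "C = cmp E (S - {w}) u" using comps_eq[OF symE C uv(1)] .
  then have "conn E (S - {w}) u v" using uv(2) comp_conn by fast
  then obtain q where q: "is_path E (S - {w}) q u v" unfolding conn_def by blast
  have qV: "is_path E V q u v" using is_path_mono[OF q] S unfolding cvx_def by blast
  have "u \<in> V" "v \<in> V" using uv \<open>C \<subseteq> V\<close> by auto
  then have "p = q" using path_unique p qV by blast
  show "set p \<subseteq> C"
  proof
    fix x assume "x \<in> set p"
    then have "conn E (S - {w}) u x" using conn_path_elem[OF q] \<open>p = q\<close> by simp
    then show "x \<in> C" using Cu comp_conn by fast
  qed
qed

lemma cvx_sep:
  assumes "cvx S" "u \<in> S - {w}" "v \<in> S - {w}" "is_path E V p u v" "w \<notin> set p"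
  shows "conn E (S - {w}) u v"
proof -
  have "set p \<subseteq> S" using assms unfolding cvx_def by blast
  then have "set p \<subseteq> S - {w}" using assms(5) by blast
  then show ?thesis unfolding conn_def using is_path_restrict[OF assms(4)] by blast
qed

definition rkc :: "'a set \<Rightarrow> ('a \<Rightarrow> nat) \<Rightarrow> bool" where
  "rkc W l \<longleftrightarrow> (\<forall>u\<in>W. \<forall>v\<in>W. u \<noteq> v \<and> l u = l v \<longrightarrow>
      (\<exists>p z. is_path E V p u v \<and> z \<in> set p \<and> z \<noteq> u \<and> z \<noteq> v \<and> l z > l v))"

lemma combine:
  assumes S: "cvx S" and w: "w \<in> S"
    and H: "\<forall>C\<in>comps E (S - {w}). (\<forall>x\<in>C \<inter> W. 1 \<le> L C x \<and> L C x \<le> m) \<and> rkc (C \<inter> W) (L C)"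
  defines "l' \<equiv> (\<lambda>x. if x = w then Suc m else L (cmp E (S - {w}) x) x)"
  shows "(\<forall>x\<in>S \<inter> W. x \<noteq> w \<longrightarrow> 1 \<le> l' x \<and> l' x \<le> m) \<and> l' w = Suc m \<and> rkc (S \<inter> W) l'"
proof -
  have cx: "cmp E (S - {w}) x \<in> comps E (S - {w})" "x \<in> cmp E (S - {w}) x" if "x \<in> S" "x \<noteq> w" for x
  proof -
    have "x \<in> S - {w}" using that by simp
    then show "cmp E (S - {w}) x \<in> comps E (S - {w})" "x \<in> cmp E (S - {w}) x"
      by (rule comps_cover, rule comp_self)
  qed
  have lx: "l' x = L (cmp E (S - {w}) x) x" if "x \<noteq> w" for x
    using that l'_def by simp
  have B: "1 \<le> l' x \<and> l' x \<le> m" if "x \<in> S \<inter> W" "x \<noteq> w" for x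
  proof -
    have "x \<in> cmp E (S - {w}) x \<inter> W" using cx(2)[of x] that by blast
    moreover have "cmp E (S - {w}) x \<in> comps E (S - {w})" using cx(1) that by simp
    ultimately have "1 \<le> L (cmp E (S - {w}) x) x \<and> L (cmp E (S - {w}) x) x \<le> m"
      using H by blast
    then show ?thesis using lx[OF that(2)] by simp
  qed
  have lw: "l' w = Suc m" by (simp add: l'_def)
  have "rkc (S \<inter> W) l'"
    unfolding rkc_def
  proof (intro ballI impI)
    fix u v assume u: "u \<in> S \<inter> W" and v: "v \<in> S \<inter> W" and uv: "u \<noteq> v \<and> l' u = l' v"
    have "u \<noteq> w"
    proof
      assume "u = w"
      then have "v \<noteq> w" "l' v = Suc m" using uv lw by auto
      then show False using B[OF v] by simp
    qed
    have "v \<noteq> w"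
    proof
      assume "v = w"
      then have "l' u = Suc m" using uv lw by auto
      then show False using B[OF u \<open>u \<noteq> w\<close>] by simp
    qed
    define Cu where "Cu = cmp E (S - {w}) u"
    have Cu: "Cu \<in> comps E (S - {w})" "u \<in> Cu" using cx[of u] u \<open>u \<noteq> w\<close> Cu_def by auto
    show "\<exists>p z. is_path E V p u v \<and> z \<in> set p \<and> z \<noteq> u \<and> z \<noteq> v \<and> l' z > l' v"
    proof (cases "v \<in> Cu")
      case True
      have Cv: "cmp E (S - {w}) v = Cu" using comps_eq[OF symE Cu(1) True] by simp
      have rk: "rkc (Cu \<inter> W) (L Cu)" using H Cu(1) by blast
      have eq: "L Cu u = L Cu v" using uv lx[OF \<open>u \<noteq> w\<close>] lx[OF \<open>v \<noteq> w\<close>] Cv Cu_def by simp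
      have uC: "u \<in> Cu \<inter> W" using u Cu(2) by blast
      have vC: "v \<in> Cu \<inter> W" using v True by blast
      have "\<exists>p z. is_path E V p u v \<and> z \<in> set p \<and> z \<noteq> u \<and> z \<noteq> v \<and> L Cu z > L Cu v"
        using rk[unfolded rkc_def, rule_format, OF uC vC] uv eq by blast
      then obtain p z where pz: "is_path E V p u v" "z \<in> set p" "z \<noteq> u" "z \<noteq> v" "L Cu z > L Cu v"
        by blast
      have "cvx Cu" using cvx_comp[OF S w Cu(1)] .
      then have "set p \<subseteq> Cu" using pz(1) Cu(2) True unfolding cvx_def by blast
      then have "z \<in> Cu" using pz(2) by blast
      have "z \<noteq> w" using \<open>z \<in> Cu\<close> comps_sub[OF Cu(1)] by blast
      have "cmp E (S - {w}) z = Cu" using comps_eq[OF symE Cu(1) \<open>z \<in> Cu\<close>] by simp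
      then have "l' z = L Cu z" using lx[OF \<open>z \<noteq> w\<close>] by simp
      moreover have "l' v = L Cu v" using lx[OF \<open>v \<noteq> w\<close>] Cv by simp
      ultimately have "l' z > l' v" using pz(5) by simp
      then show ?thesis using pz(1-4) by blast
    next
      case False
      have "u \<in> V" "v \<in> V" using u v S unfolding cvx_def by auto
      then obtain p where p: "is_path E V p u v" using path_exists by blast
      have "w \<in> set p"
      proof (rule ccontr)
        assume "w \<notin> set p"
        moreover have "u \<in> S - {w}" "v \<in> S - {w}" using u v \<open>u \<noteq> w\<close> \<open>v \<noteq> w\<close> by auto
        ultimately have "conn E (S - {w}) u v" using cvx_sep[OF S _ _ p] by blast
        then have "v \<in> Cu" unfolding Cu_def comp_conn .
        then show False using False by simp
      qed
      moreover have "l' v < l' w" using B[OF v \<open>v \<noteq> w\<close>] lw by simp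
      ultimately show ?thesis using p \<open>u \<noteq> w\<close> \<open>v \<noteq> w\<close> by blast
    qed
  qed
  then show ?thesis using B lw by blast
qed
lemma cvx_path: "cvx S \<Longrightarrow> u \<in> S \<Longrightarrow> v \<in> S \<Longrightarrow> is_path E V p u v \<Longrightarrow> set p \<subseteq> S"
  unfolding cvx_def by blast

lemma cvx_sub: "cvx S \<Longrightarrow> S \<subseteq> V"
  unfolding cvx_def by blast

lemma cvx_fin: "cvx S \<Longrightarrow> finite S"
  unfolding cvx_def using finV finite_subset by blast

lemma centroid:
  assumes S: "cvx S" and ne: "S \<noteq> {}"
  shows "\<exists>w\<in>S. \<forall>C\<in>comps E (S - {w}). 2 * card C \<le> card S"
proof -
  have finS: "finite S" using cvx_fin[OF S] .
  have SV: "S \<subseteq> V" using S unfolding cvx_def by blast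
  define f where "f z = Max (insert 0 (card ` comps E (S - {z})))" for z
  obtain z0 where "z0 \<in> S" using ne by blast
  obtain z where z: "z \<in> S" "\<forall>y. y \<in> S \<longrightarrow> f z \<le> f y"
    using ex_has_least_nat[of "\<lambda>z. z \<in> S" z0 f] \<open>z0 \<in> S\<close> by blast
  show ?thesis
  proof (rule ccontr)
    assume "\<not> ?thesis"
    then obtain C where C: "C \<in> comps E (S - {z})" and big: "2 * card C > card S"
      using z(1) by force
    have CS: "C \<subseteq> S - {z}" using comps_sub[OF C] .
    have finC: "finite C" using finS CS finite_subset by blast
    have "card C > 0" using big by simp
    then have "C \<noteq> {}" by auto
    then obtain c0 where c0: "c0 \<in> C" by auto
    have "c0 \<in> S" using c0 CS by auto
    have "c0 \<in> V" "z \<in> V" using \<open>c0 \<in> S\<close> SV z(1) by auto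
    then obtain p where p: "is_path E V p z c0" by (meson path_exists)
    have pS: "set p \<subseteq> S" using cvx_path[OF S z(1) \<open>c0 \<in> S\<close> p] .
    obtain a p' where pp: "p = a # p'" using p by (cases p) auto
    have "a = z" using p pp by (simp add: is_path_def)
    have "c0 \<noteq> z" using c0 CS by blast
    have "p' \<noteq> []"
    proof
      assume "p' = []"
      then have "a = c0" using p pp by (auto simp add: is_path_def)
      then show False using \<open>a = z\<close> \<open>c0 \<noteq> z\<close> by simp
    qed
    define y where "y = hd p'"
    have py: "E z y" "z \<notin> set p'" "is_path E V p' y c0"
      using p pp \<open>p' \<noteq> []\<close> \<open>a = z\<close> unfolding y_def by (auto simp: is_path_Cons)
    have "set p' \<subseteq> S - {z}" using pS pp py(2) by auto
    then have "is_path E (S - {z}) p' y c0" using is_path_restrict[OF py(3)] by blast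
    then have "conn E (S - {z}) y c0" unfolding conn_def by blast
    then have "conn E (S - {z}) c0 y" by (rule conn_sym[OF symE])
    moreover have CC0: "C = cmp E (S - {z}) c0" using comps_eq[OF symE C c0] .
    ultimately have yC: "y \<in> C" using comp_conn by fast
    have Cy: "C = cmp E (S - {z}) y" using comps_eq[OF symE C yC] .
    have yS: "y \<in> S" "y \<noteq> z" using yC CS by auto
    have small: "card C' < card C" if C': "C' \<in> comps E (S - {y})" for C'
    proof -
      have C'sub: "C' \<subseteq> S - {y}" using comps_sub[OF C'] .
      show ?thesis
      proof (cases "z \<in> C'")
        case True
        have C'z: "C' = cmp E (S - {y}) z" using comps_eq[OF symE C' True] .
        have disj: "C' \<inter> C = {}"
        proof (rule ccontr)
          assume "C' \<inter> C \<noteq> {}"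
          then obtain x where x: "x \<in> C'" "x \<in> C" by blast
          have "conn E (S - {y}) z x" using x(1) C'z comp_conn by fast
          then have "conn E (S - {y}) x z" by (rule conn_sym[OF symE])
          then obtain q where q: "is_path E (S - {y}) q x z" unfolding conn_def by blast
          have "conn E (S - {z}) y x" using x(2) Cy comp_conn by fast
          then have "conn E (S - {z}) x y" by (rule conn_sym[OF symE])
          then obtain q' where q': "is_path E (S - {z}) q' x y" unfolding conn_def by blast
          have "z \<notin> set q'" using q' is_path_set by fast
          moreover have "E y z" using py(1) symE by blast
          moreover have "is_path E V q' x y" using is_path_mono[OF q'] SV by blast
          ultimately have q2: "is_path E V (q' @ [z]) x z" using path_snoc \<open>z \<in> V\<close> by fast
          have qV: "is_path E V q x z" using is_path_mono[OF q] SV by blast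
          have "x \<in> V" using x(2) CS SV by blast
          then have "q = q' @ [z]" using path_unique[OF _ \<open>z \<in> V\<close> qV q2] by simp
          moreover have "y \<in> set q'" using q' is_path_set by fast
          ultimately have "y \<in> set q" by simp
          then show False using q is_path_set by fast
        qed
        have "C' \<subseteq> S - C" using disj C'sub by blast
        then have "card C' \<le> card (S - C)" using finS by (simp add: card_mono)
        also have "\<dots> = card S - card C" using CS by (intro card_Diff_subset[OF finC]) blast
        finally show ?thesis using big by simp
      next
        case False
        have "C' \<subseteq> C - {y}"
        proof
          fix x assume x: "x \<in> C'"
          have xS: "x \<in> S" "x \<noteq> y" "x \<noteq> z" using x C'sub False by auto
          have C'x: "C' = cmp E (S - {y}) x" using comps_eq[OF symE C' x] .
          have "x \<in> V" "y \<in> V" using xS yS SV by auto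
          then obtain q where q: "is_path E V q x y" by (meson path_exists)
          have qS: "set q \<subseteq> S" using cvx_path[OF S xS(1) yS(1) q] .
          show "x \<in> C - {y}"
          proof (cases "z \<in> set q")
            case False
            then have "set q \<subseteq> S - {z}" using qS by blast
            then have "conn E (S - {z}) x y" unfolding conn_def using is_path_restrict[OF q] by blast
            then have "conn E (S - {z}) y x" by (rule conn_sym[OF symE])
            then show ?thesis using Cy comp_conn xS by fast
          next
            case True
            obtain q0 where q0: "is_path E V q0 x z" "set q0 \<subseteq> set q" "z \<noteq> y \<longrightarrow> y \<notin> set q0"
              using path_prefix[OF q True] by blast
            have "set q0 \<subseteq> S - {y}" using q0 qS yS by blast
            then have "conn E (S - {y}) x z" unfolding conn_def using is_path_restrict[OF q0(1)] by blast
            then have "z \<in> C'" using C'x comp_conn by fast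
            then show ?thesis using \<open>z \<notin> C'\<close> by simp
          qed
        qed
        then have "card C' \<le> card (C - {y})" using finC by (simp add: card_mono)
        also have "\<dots> < card C" using finC yC by (rule card_Diff1_less)
        finally show ?thesis .
      qed
    qed
    have finCy: "finite (comps E (S - {y}))" using finS finite_comps by blast
    have "f y < card C" unfolding f_def
      using finCy small \<open>card C > 0\<close> by (simp add: Max_less_iff)
    moreover have "card C \<le> f z" unfolding f_def
      using finite_comps[of "S - {z}" E] finS C by (intro Max_ge) auto
    moreover have "f z \<le> f y" using z(2) yS(1) by blast
    ultimately show False by simp
  qed
qed

lemma rank_log:
  "cvx S \<Longrightarrow> card S < 2 ^ K \<Longrightarrow> \<exists>l. (\<forall>x\<in>S. 1 \<le> l x \<and> l x \<le> K) \<and> rkc S l"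
proof (induction K arbitrary: S)
  case 0
  then have "S = {}" using cvx_fin[OF "0.prems"(1)] by simp
  then show ?case by (simp add: rkc_def)
next
  case (Suc K)
  show ?case
  proof (cases "S = {}")
    case True then show ?thesis by (simp add: rkc_def)
  next
    case False
    obtain w where w: "w \<in> S" "\<forall>C\<in>comps E (S - {w}). 2 * card C \<le> card S"
      using centroid[OF Suc.prems(1) False] by blast
    have ex: "\<forall>C\<in>comps E (S - {w}). \<exists>L. (\<forall>x\<in>C. 1 \<le> L x \<and> L x \<le> K) \<and> rkc C L"
    proof (intro ballI)
      fix C assume C: "C \<in> comps E (S - {w})"
      have "cvx C" using cvx_comp[OF Suc.prems(1) w(1) C] .
      moreover have "card C < 2 ^ K"
      proof -
        have "2 * card C \<le> card S" using w(2) C by blast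
        moreover have "card S < 2 * 2 ^ K" using Suc.prems(2) by simp
        ultimately show ?thesis by linarith
      qed
      ultimately show "\<exists>L. (\<forall>x\<in>C. 1 \<le> L x \<and> L x \<le> K) \<and> rkc C L" by (rule Suc.IH)
    qed
    obtain L where L: "\<forall>C\<in>comps E (S - {w}). (\<forall>x\<in>C. 1 \<le> L C x \<and> L C x \<le> K) \<and> rkc C (L C)"
      using bchoice[OF ex] by blast
    have SV: "S \<subseteq> V" using cvx_sub[OF Suc.prems(1)] .
    have H: "\<forall>C\<in>comps E (S - {w}). (\<forall>x\<in>C \<inter> V. 1 \<le> L C x \<and> L C x \<le> K) \<and> rkc (C \<inter> V) (L C)"
    proof
      fix C assume C: "C \<in> comps E (S - {w})"
      then have "C \<inter> V = C" using comps_sub[OF C] SV by blast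
      then show "(\<forall>x\<in>C \<inter> V. 1 \<le> L C x \<and> L C x \<le> K) \<and> rkc (C \<inter> V) (L C)" using L C by simp
    qed
    define l' where "l' = (\<lambda>x. if x = w then Suc K else L (cmp E (S - {w}) x) x)"
    have R: "(\<forall>x\<in>S \<inter> V. x \<noteq> w \<longrightarrow> 1 \<le> l' x \<and> l' x \<le> K) \<and> l' w = Suc K \<and> rkc (S \<inter> V) l'"
      unfolding l'_def by (rule combine[OF Suc.prems(1) w(1) H])
    have "S \<inter> V = S" using SV by blast
    have "\<forall>x\<in>S. 1 \<le> l' x \<and> l' x \<le> Suc K"
    proof
      fix x assume x: "x \<in> S"
      show "1 \<le> l' x \<and> l' x \<le> Suc K"
      proof (cases "x = w")
        case True then show ?thesis using R by simp
      next
        case False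
        then have "1 \<le> l' x \<and> l' x \<le> K" using R x SV by blast
        then show ?thesis by simp
      qed
    qed
    moreover have "rkc S l'" using R \<open>S \<inter> V = S\<close> by simp
    ultimately show ?thesis by blast
  qed
qed

lemma rkc_vr:
  assumes UV: "U \<subseteq> V" and U: "is_tree E U" and l1: "\<forall>x\<in>U. 1 \<le> l x" and rk: "rkc U l"
  shows "vertex_ranking E U l"
proof -
  have uq: "\<forall>u\<in>U. \<forall>v\<in>U. \<exists>!p. is_path E U p u v" using U by (simp add: is_tree_def)
  have P: "\<exists>p z. is_path E U p u v \<and> z \<in> set p \<and> z \<noteq> u \<and> z \<noteq> v \<and> l z > l v"
    if u: "u \<in> U" and v: "v \<in> U" and uv: "u \<noteq> v \<and> l u = l v" for u v
  proof -
    have "\<exists>p z. is_path E V p u v \<and> z \<in> set p \<and> z \<noteq> u \<and> z \<noteq> v \<and> l z > l v"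
      using rk[unfolded rkc_def, rule_format, OF u v uv] .
    then obtain p z where pz: "is_path E V p u v" "z \<in> set p" "z \<noteq> u" "z \<noteq> v" "l z > l v" by blast
    have "\<exists>!p. is_path E U p u v" using uq u v by blast
    then obtain q where q: "is_path E U q u v" by (meson ex1_implies_ex)
    have qV: "is_path E V q u v" using is_path_mono[OF q UV] .
    have "u \<in> V" "v \<in> V" using u v UV by auto
    then have "p = q" using path_unique pz(1) qV by blast
    then show ?thesis using pz q by blast
  qed
  show ?thesis unfolding vertex_ranking_def
  proof (intro conjI)
    show "\<forall>v\<in>U. 1 \<le> l v" by fact
    show "\<forall>u\<in>U. \<forall>v\<in>U. u \<noteq> v \<and> l u = l v \<longrightarrow>
        (\<exists>p z. is_path E U p u v \<and> z \<in> set p \<and> z \<noteq> u \<and> z \<noteq> v \<and> l z > l v)"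
      using P by blast
  qed
qed

lemma dt_lower:
  assumes UV: "U \<subseteq> V" and cpos: "\<forall>v\<in>V. 0 < c v" and ca: "\<forall>v\<in>U. a < c v" and a0: "0 < a"
  shows "is_dt E S D \<Longrightarrow> cvx S \<longrightarrow> (\<exists>l' m. (\<forall>x\<in>S \<inter> U. 1 \<le> l' x \<and> l' x \<le> m) \<and> rkc (S \<inter> U) l'
           \<and> (\<exists>r\<in>path_costs c D. real m * a \<le> r))"
proof (induction rule: is_dt.induct)
  case (1 v S Cs ts)
  show ?case
  proof
    assume S: "cvx S"
    have ex: "\<forall>C\<in>set Cs. \<exists>L m r. (\<forall>x\<in>C \<inter> U. 1 \<le> L x \<and> L x \<le> m) \<and> rkc (C \<inter> U) L
        \<and> r \<in> path_costs c (DNode v ts) \<and> real m * a + c v \<le> r"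
    proof
      fix C assume C: "C \<in> set Cs"
      then have Cc: "C \<in> comps E (S - {v})" using "1"(3) by simp
      have cC: "cvx C" using cvx_comp[OF S "1"(1) Cc] .
      obtain t where t: "t \<in> set ts" and IH: "cvx C \<longrightarrow> (\<exists>l' m. (\<forall>x\<in>C \<inter> U. 1 \<le> l' x \<and> l' x \<le> m)
          \<and> rkc (C \<inter> U) l' \<and> (\<exists>r\<in>path_costs c t. real m * a \<le> r))"
        using l2_set'[OF "1"(4) C] by blast
      obtain L m r where Lm: "\<forall>x\<in>C \<inter> U. 1 \<le> L x \<and> L x \<le> m" "rkc (C \<inter> U) L"
        and r: "r \<in> path_costs c t" "real m * a \<le> r"
        using IH cC by blast
      have "c v + r \<in> path_costs c (DNode v ts)" using t r(1) by auto
      then show "\<exists>L m r. (\<forall>x\<in>C \<inter> U. 1 \<le> L x \<and> L x \<le> m) \<and> rkc (C \<inter> U) L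
        \<and> r \<in> path_costs c (DNode v ts) \<and> real m * a + c v \<le> r"
        using Lm r(2) by (intro exI[of _ L] exI[of _ m] exI[of _ "c v + r"]) simp
    qed
    obtain L where L: "\<forall>C\<in>set Cs. \<exists>m r. (\<forall>x\<in>C \<inter> U. 1 \<le> L C x \<and> L C x \<le> m) \<and> rkc (C \<inter> U) (L C)
        \<and> r \<in> path_costs c (DNode v ts) \<and> real m * a + c v \<le> r"
      using bchoice[OF ex] by blast
    obtain M where M: "\<forall>C\<in>set Cs. \<exists>r. (\<forall>x\<in>C \<inter> U. 1 \<le> L C x \<and> L C x \<le> M C) \<and> rkc (C \<inter> U) (L C)
        \<and> r \<in> path_costs c (DNode v ts) \<and> real (M C) * a + c v \<le> r"
      using bchoice[OF L] by blast
    obtain R where R: "\<forall>C\<in>set Cs. (\<forall>x\<in>C \<inter> U. 1 \<le> L C x \<and> L C x \<le> M C) \<and> rkc (C \<inter> U) (L C)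
        \<and> R C \<in> path_costs c (DNode v ts) \<and> real (M C) * a + c v \<le> R C"
      using bchoice[OF M] by blast
    define M0 where "M0 = Max (insert 0 (M ` set Cs))"
    have fin: "finite (insert 0 (M ` set Cs))" by simp
    have Mle: "M C \<le> M0" if "C \<in> set Cs" for C
      unfolding M0_def using fin that by (intro Max_ge) auto
    have H: "\<forall>C\<in>comps E (S - {v}). (\<forall>x\<in>C \<inter> U. 1 \<le> L C x \<and> L C x \<le> M0) \<and> rkc (C \<inter> U) (L C)"
    proof
      fix C assume "C \<in> comps E (S - {v})"
      then have C: "C \<in> set Cs" using "1"(3) by simp
      have "\<forall>x\<in>C \<inter> U. 1 \<le> L C x \<and> L C x \<le> M C" "rkc (C \<inter> U) (L C)" using R C by blast+
      then show "(\<forall>x\<in>C \<inter> U. 1 \<le> L C x \<and> L C x \<le> M0) \<and> rkc (C \<inter> U) (L C)"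
        using Mle[OF C] by (meson le_trans)
    qed
    define l' where "l' = (\<lambda>x. if x = v then Suc M0 else L (cmp E (S - {v}) x) x)"
    have CB: "(\<forall>x\<in>S \<inter> U. x \<noteq> v \<longrightarrow> 1 \<le> l' x \<and> l' x \<le> M0) \<and> l' v = Suc M0 \<and> rkc (S \<inter> U) l'"
      unfolding l'_def by (rule combine[OF S "1"(1) H])
    define mf where "mf = (if v \<in> U then Suc M0 else M0)"
    have B: "\<forall>x\<in>S \<inter> U. 1 \<le> l' x \<and> l' x \<le> mf"
    proof
      fix x assume x: "x \<in> S \<inter> U"
      show "1 \<le> l' x \<and> l' x \<le> mf"
      proof (cases "x = v")
        case True then show ?thesis using CB x mf_def by simp
      next
        case False
        then have "1 \<le> l' x \<and> l' x \<le> M0" using CB x by blast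
        then show ?thesis unfolding mf_def by simp
      qed
    qed
    have vV: "v \<in> V" using cvx_sub[OF S] "1"(1) by blast
    then have cv: "0 < c v" using cpos by blast
    have cva: "v \<in> U \<Longrightarrow> a < c v" using ca by blast
    have cost: "\<exists>r\<in>path_costs c (DNode v ts). real mf * a \<le> r"
    proof (cases "M0 = 0")
      case True
      have "real mf * a \<le> c v"
      proof (cases "v \<in> U")
        case True
        then show ?thesis using cva \<open>M0 = 0\<close> mf_def by simp
      next
        case False
        then show ?thesis using cv \<open>M0 = 0\<close> mf_def by simp
      qed
      then show ?thesis by auto
    next
      case False
      have "M0 \<in> insert 0 (M ` set Cs)" unfolding M0_def using fin by (intro Max_in) auto
      then obtain C where C: "C \<in> set Cs" "M C = M0" using False by auto
      have RC: "R C \<in> path_costs c (DNode v ts)" "real M0 * a + c v \<le> R C" using R C by auto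
      have "real mf * a \<le> real M0 * a + c v"
      proof (cases "v \<in> U")
        case True
        then have "real mf * a = real M0 * a + a" unfolding mf_def by (simp add: algebra_simps)
        then show ?thesis using cva True by simp
      next
        case False
        then show ?thesis using cv mf_def by simp
      qed
      then show ?thesis using RC by force
    qed
    show "\<exists>l' m. (\<forall>x\<in>S \<inter> U. 1 \<le> l' x \<and> l' x \<le> m) \<and> rkc (S \<inter> U) l'
           \<and> (\<exists>r\<in>path_costs c (DNode v ts). real m * a \<le> r)"
      using B CB cost by blast
  qed
qed

end


lemma finite_pc: "finite (path_costs c D)"
  by (induction D) auto

lemma pc_ne: "path_costs c D \<noteq> {}"
  by (cases D) auto

lemma COST_ge: "r \<in> path_costs c D \<Longrightarrow> r \<le> COST D c"
  unfolding COST_def by (rule Max_ge[OF finite_pc])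

lemma COST_le: "\<forall>r\<in>path_costs c D. r \<le> x \<Longrightarrow> COST D c \<le> x"
  unfolding COST_def using finite_pc[of c D] pc_ne[of c D] by (simp add: Max_le_iff)

lemma rank_cost:
  assumes finU: "finite U" and cb: "\<forall>v\<in>U. c v \<le> b" and b0: "0 \<le> b"
  shows "rank_dt E l S D \<Longrightarrow> S \<subseteq> U \<longrightarrow> (\<forall>r\<in>path_costs c D. r \<le> b * real (card (l ` S)))"
proof (induction rule: rank_dt.induct)
  case (1 z S Cs ts)
  show ?case
  proof (intro impI ballI)
    fix r assume SU: "S \<subseteq> U" and r: "r \<in> path_costs c (DNode z ts)"
    have finS: "finite S" using finU SU finite_subset by blast
    have "l ` S \<noteq> {}" using "1"(1) by blast
    then have card1: "1 \<le> card (l ` S)" using finS by (simp add: Suc_leI card_gt_0_iff)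
    have cz: "c z \<le> b" using cb SU "1"(1) by blast
    have "r = c z \<or> (\<exists>t\<in>set ts. \<exists>r'\<in>path_costs c t. r = c z + r')" using r by auto
    then show "r \<le> b * real (card (l ` S))"
    proof
      assume "r = c z"
      moreover have "b * 1 \<le> b * real (card (l ` S))" using card1 b0 by (intro mult_left_mono) auto
      ultimately show ?thesis using cz by simp
    next
      assume "\<exists>t\<in>set ts. \<exists>r'\<in>path_costs c t. r = c z + r'"
      then obtain t r' where t: "t \<in> set ts" "r' \<in> path_costs c t" "r = c z + r'" by blast
      obtain C where C: "C \<in> set Cs" and IH: "C \<subseteq> U \<longrightarrow> (\<forall>r\<in>path_costs c t. r \<le> b * real (card (l ` C)))"
        using l2_set[OF "1"(5) t(1)] by blast
      have CS: "C \<subseteq> S - {z}" using comps_sub[of C E "S - {z}"] C "1"(4) by simp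
      then have "r' \<le> b * real (card (l ` C))" using IH SU t(2) by blast
      have "l ` C \<subseteq> l ` S - {l z}"
      proof
        fix y assume "y \<in> l ` C"
        then obtain x where x: "x \<in> C" "y = l x" by blast
        then have "x \<in> S" "x \<noteq> z" using CS by auto
        then have "l x < l z" using "1"(2) by blast
        then show "y \<in> l ` S - {l z}" using x \<open>x \<in> S\<close> by auto
      qed
      then have "card (l ` C) \<le> card (l ` S - {l z})" using finS by (intro card_mono) auto
      also have "\<dots> = card (l ` S) - 1" using "1"(1) by simp
      finally have "card (l ` C) + 1 \<le> card (l ` S)" using card1 by simp
      then have "real (card (l ` C)) + 1 \<le> real (card (l ` S))" by linarith
      then have "b * (real (card (l ` C)) + 1) \<le> b * real (card (l ` S))" using b0 by (rule mult_left_mono)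
      then show ?thesis using t(3) cz \<open>r' \<le> b * real (card (l ` C))\<close> by (simp add: algebra_simps)
    qed
  qed
qed

lemma dt_exists: "finite S \<Longrightarrow> S \<noteq> {} \<Longrightarrow> \<exists>D. is_dt E S D"
proof (induction "card S" arbitrary: S rule: less_induct)
  case less
  obtain v where v: "v \<in> S" using less.prems(2) by blast
  have ex: "\<forall>C\<in>comps E (S - {v}). \<exists>D. is_dt E C D"
  proof
    fix C assume C: "C \<in> comps E (S - {v})"
    then obtain x where x: "x \<in> S - {v}" "C = cmp E (S - {v}) x" unfolding comps_alt by blast
    have "x \<in> C" using comp_self[OF x(1)] x(2) by simp
    have CS: "C \<subseteq> S - {v}" using comps_sub[OF C] .
    have "finite C" using CS less.prems(1) finite_subset by blast
    moreover have "card C < card S" using CS v less.prems(1) by (intro psubset_card_mono) auto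
    moreover have "C \<noteq> {}" using \<open>x \<in> C\<close> by blast
    ultimately show "\<exists>D. is_dt E C D" using less.hyps by blast
  qed
  obtain DD where DD: "\<forall>C\<in>comps E (S - {v}). is_dt E C (DD C)" using bchoice[OF ex] by blast
  have "finite (comps E (S - {v}))" using less.prems(1) finite_comps by blast
  then obtain Cs where Cs: "set Cs = comps E (S - {v})" "distinct Cs" using finite_distinct_list by blast
  have "list_all2 (is_dt E) Cs (map DD Cs)"
    unfolding list_all2_conv_all_nth using DD Cs(1) by auto
  then show ?case using is_dt.intros[OF v Cs(2) Cs(1)] by blast
qed

lemma dt_reach:
  assumes cpos: "\<forall>v\<in>V. 0 < c v"
  shows "is_dt E S D \<Longrightarrow> S \<subseteq> V \<longrightarrow> x \<in> S \<longrightarrow> (\<exists>r\<in>path_costs c D. c x \<le> r)"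
proof (induction rule: is_dt.induct)
  case (1 v S Cs ts)
  show ?case
  proof (intro impI)
    assume SV: "S \<subseteq> V" and x: "x \<in> S"
    show "\<exists>r\<in>path_costs c (DNode v ts). c x \<le> r"
    proof (cases "x = v")
      case True then show ?thesis by simp
    next
      case False
      define C where "C = cmp E (S - {v}) x"
      have xS: "x \<in> S - {v}" using x False by simp
      have "C \<in> comps E (S - {v})" unfolding C_def by (rule comps_cover[OF xS])
      then have C1: "C \<in> set Cs" using "1"(3) by simp
      have C2: "x \<in> C" unfolding C_def by (rule comp_self[OF xS])
      note C = C1 C2
      obtain t where t: "t \<in> set ts" and IH: "C \<subseteq> V \<longrightarrow> x \<in> C \<longrightarrow> (\<exists>r\<in>path_costs c t. c x \<le> r)"
        using l2_set'[OF "1"(4) C(1)] by blast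
      have "C \<subseteq> S" using comp_sub[of E "S - {v}" x] unfolding C_def by blast
      then obtain r where r: "r \<in> path_costs c t" "c x \<le> r" using IH SV C(2) by blast
      have "0 < c v" using cpos SV "1"(1) by blast
      then have "c x \<le> c v + r" using r by simp
      moreover have "c v + r \<in> path_costs c (DNode v ts)" using t r by auto
      ultimately show ?thesis by blast
    qed
  qed
qed


theorem lemma9:
  fixes E :: "'a \<Rightarrow> 'a \<Rightarrow> bool" and V U :: "'a set" and c :: "'a \<Rightarrow> real"
    and a b :: real and l :: "'a \<Rightarrow> nat" and D :: "'a dtree"
  assumes tree: "is_tree E V"
    and cpos: "\<forall>v\<in>V. c v > 0"
    and cmax: "Max (c ` V) = 1"
    and sub: "U \<subseteq> V" "is_tree E U"
    and ab: "0 < a" "a < b" "b \<le> 2 * a"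
    and cb: "\<forall>v\<in>U. c v \<le> b"
    and alt: "b \<le> 1 / log 2 (real (card V)) \<or> (\<forall>v\<in>U. c v > a)"
    and rk: "optimal_ranking E U l"
    and D: "rank_dt E l U D"
  shows "COST D c \<le> 2 * OPT E V c"
proof -
  interpret tr E V using tree by (simp add: tr_def)
  have finU: "finite U" using sub(2) by (simp add: is_tree_def)
  have neU: "U \<noteq> {}" using sub(2) by (simp add: is_tree_def)
  have neV: "V \<noteq> {}" using tree by (simp add: is_tree_def)
  define k where "k = card (l ` U)"
  have "\<forall>r\<in>path_costs c D. r \<le> b * real (card (l ` U))"
    using rank_cost[OF finU cb, of E l U D] ab D by simp
  then have cost: "COST D c \<le> b * real k" unfolding k_def by (rule COST_le)
  obtain D0 where "is_dt E V D0" using dt_exists[OF finV neV] by blast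
  then have neX: "{COST D c | D. is_dt E V D} \<noteq> {}" by blast
  have Opt: "x \<le> OPT E V c" if H: "\<And>D'. is_dt E V D' \<Longrightarrow> x \<le> COST D' c" for x
    unfolding OPT_def using neX H by (intro cInf_greatest) auto
  have kopt: "k \<le> card (l' ` U)" if "vertex_ranking E U l'" for l'
    using rk that unfolding optimal_ranking_def k_def by blast
  show ?thesis
  proof (cases "\<forall>v\<in>U. c v > a")
    case True
    have "real k * a \<le> COST D' c" if D': "is_dt E V D'" for D'
    proof -
      have "cvx V \<longrightarrow> (\<exists>l' m. (\<forall>x\<in>V \<inter> U. 1 \<le> l' x \<and> l' x \<le> m) \<and> rkc (V \<inter> U) l'
           \<and> (\<exists>r\<in>path_costs c D'. real m * a \<le> r))"
        using dt_lower[OF sub(1) cpos True ab(1) D'] .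
      then obtain l' m r where lm: "\<forall>x\<in>V \<inter> U. 1 \<le> l' x \<and> l' x \<le> m" "rkc (V \<inter> U) l'"
        and r: "r \<in> path_costs c D'" "real m * a \<le> r"
        using cvx_V by blast
      have VU: "V \<inter> U = U" using sub(1) by blast
      have "vertex_ranking E U l'" using rkc_vr[OF sub] lm VU by simp
      then have "k \<le> card (l' ` U)" by (rule kopt)
      also have "card (l' ` U) \<le> card {1..m}" using lm VU by (intro card_mono) auto
      finally have "k \<le> m" by simp
      then have "real k * a \<le> real m * a" using ab(1) by (intro mult_right_mono) auto
      also have "\<dots> \<le> r" by fact
      also have "r \<le> COST D' c" using COST_ge[OF r(1)] .
      finally show ?thesis .
    qed
    then have "real k * a \<le> OPT E V c" by (rule Opt)
    moreover have "b * real k \<le> 2 * a * real k" using ab by (intro mult_right_mono) auto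
    ultimately show ?thesis using cost by (simp add: algebra_simps)
  next
    case False
    then have bl: "b \<le> 1 / log 2 (real (card V))" using alt by blast
    obtain x0 where x0: "x0 \<in> V" "c x0 = 1"
      using Max_in[of "c ` V"] finV neV cmax by auto
    have "1 \<le> COST D' c" if D': "is_dt E V D'" for D'
    proof -
      have "\<exists>r\<in>path_costs c D'. c x0 \<le> r" using dt_reach[OF cpos D'] x0(1) by blast
      then obtain r where "r \<in> path_costs c D'" "1 \<le> r" using x0 by auto
      then show ?thesis using COST_ge by fastforce
    qed
    then have opt1: "1 \<le> OPT E V c" by (rule Opt)
    define n where "n = card V"
    have "n \<ge> 1" using finV neV unfolding n_def by (simp add: Suc_leI card_gt_0_iff)
    have "n \<noteq> 1"
    proof
      assume "n = 1"
      then have "b \<le> 0" using bl unfolding n_def by simp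
      then show False using ab by simp
    qed
    then have n2: "n \<ge> 2" using \<open>n \<ge> 1\<close> by simp
    have L1: "1 \<le> log 2 (real n)"
      using n2 by (simp add: le_log_iff)
    define K where "K = (LEAST K. card U < 2 ^ K)"
    have "card U < 2 ^ card U" by (rule less_exp)
    then have K: "card U < 2 ^ K" unfolding K_def by (rule LeastI)
    have cU: "card U \<ge> 1" using finU neU by (simp add: Suc_leI card_gt_0_iff)
    have "K \<noteq> 0" using K cU by (intro notI) simp
    have K1: "2 ^ (K - 1) \<le> card U"
    proof -
      have "K - 1 < K" using \<open>K \<noteq> 0\<close> by simp
      then have "\<not> card U < 2 ^ (K - 1)" unfolding K_def by (rule not_less_Least)
      then show ?thesis by simp
    qed
    obtain l' where l': "\<forall>x\<in>U. 1 \<le> l' x \<and> l' x \<le> K" "rkc U l'"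
      using rank_log[OF cvx_tree[OF sub] K] by blast
    have "vertex_ranking E U l'" using rkc_vr[OF sub] l' by blast
    then have "k \<le> card (l' ` U)" by (rule kopt)
    also have "card (l' ` U) \<le> card {1..K}" using l' by (intro card_mono) auto
    finally have kK: "k \<le> K" by simp
    have "real (K - 1) \<le> log 2 (real (card U))"
      using K1 by (intro le_log_of_power) (simp_all add: of_nat_le_iff[symmetric])
    also have "\<dots> \<le> log 2 (real n)"
      using cU sub(1) finV n2 unfolding n_def by (subst log_le_cancel_iff) (auto intro: card_mono)
    finally have "real K \<le> log 2 (real n) + 1" using \<open>K \<noteq> 0\<close> by (simp add: of_nat_diff)
    then have kle: "real k \<le> 2 * log 2 (real n)" using kK L1 by linarith
    have "b * log 2 (real n) \<le> 1"
      using bl L1 unfolding n_def by (simp add: le_divide_eq)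
    have "b * real k \<le> b * (2 * log 2 (real n))" using kle ab by (intro mult_left_mono) auto
    also have "\<dots> \<le> 2" using \<open>b * log 2 (real n) \<le> 1\<close> by simp
    finally show ?thesis using cost opt1 by simp
  qed
qed

end
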